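(* Let $G$ be a graph with a linear order $<$ on $V(G)$ satisfying the X-property, let $s<t$ be vertices with $d^*:=\operatorname{dist}(s,t)<\infty$, and let $P=p_0,p_1,\dots,p_{d^*}$ (with $p_0=s$, $p_{d^*}=t$) be a shortest $s$-$t$ path. Then every $p_i$ with $i<\operatorname{righti}(P)$ satisfies $p_i<t$, and every $p_i$ with $i>\operatorname{lefti}(P)$ satisfies $p_i>s$.
   Context: The X-property: for all vertices $p<q<r<s$, if $\{p,r\}\in E(G)$ and $\{q,s\}\in E(G)$ then $\{p,s\}\in E(G)$. $\operatorname{dist}$ is the number of edges of a shortest path. $\operatorname{lefti}(P)$ is the index $i$ such that $p_i$ is the leftmost (w.r.t. $<$) vertex of $P$, and $\operatorname{righti}(P)$ the index of the rightmost vertex of $P$. *)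

theory Defs
  imports Main "HOL-Library.Extended_Nat"
begin

definition simple_graph :: "'a set \<Rightarrow> 'a set set \<Rightarrow> bool" where
  "simple_graph V E \<longleftrightarrow> (\<forall>e\<in>E. \<exists>u v. e = {u, v} \<and> u \<noteq> v \<and> u \<in> V \<and> v \<in> V)"

definition X_property :: "'a::linorder set set \<Rightarrow> bool" where
  "X_property E \<longleftrightarrow>
     (\<forall>p q r s. p < q \<and> q < r \<and> r < s \<and> {p, r} \<in> E \<and> {q, s} \<in> E \<longrightarrow> {p, s} \<in> E)"

definition walk :: "'a set \<Rightarrow> 'a set set \<Rightarrow> 'a list \<Rightarrow> bool" where
  "walk V E P \<longleftrightarrow> P \<noteq> [] \<and> set P \<subseteq> V \<and>
     (\<forall>i. Suc i < length P \<longrightarrow> {P ! i, P ! Suc i} \<in> E)"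

text \<open>Distance: number of edges of a shortest walk (= shortest path); \<infinity> if none.\<close>
definition dist :: "'a set \<Rightarrow> 'a set set \<Rightarrow> 'a \<Rightarrow> 'a \<Rightarrow> enat" where
  "dist V E s t = (INF P \<in> {P. walk V E P \<and> hd P = s \<and> last P = t}. enat (length P - 1))"

definition shortest_path :: "'a set \<Rightarrow> 'a set set \<Rightarrow> 'a \<Rightarrow> 'a \<Rightarrow> 'a list \<Rightarrow> bool" where
  "shortest_path V E s t P \<longleftrightarrow> walk V E P \<and> hd P = s \<and> last P = t \<and>
     enat (length P - 1) = dist V E s t"

text \<open>Index of the leftmost / rightmost vertex of P (unique, as shortest paths are distinct).\<close>
definition lefti :: "'a::linorder list \<Rightarrow> nat" where
  "lefti P = (LEAST i. i < length P \<and> P ! i = Min (set P))"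

definition righti :: "'a::linorder list \<Rightarrow> nat" where
  "righti P = (LEAST i. i < length P \<and> P ! i = Max (set P))"

end

theory Submission
  imports Defs
begin

lemma core:
  fixes lt :: "'a \<Rightarrow> 'a \<Rightarrow> bool" and adj :: "'a \<Rightarrow> 'a \<Rightarrow> bool" and f :: "nat \<Rightarrow> 'a"
  assumes trans: "\<And>x y z. lt x y \<Longrightarrow> lt y z \<Longrightarrow> lt x z"
    and irr: "\<And>x. \<not> lt x x"
    and tot: "\<And>x y. x \<noteq> y \<Longrightarrow> lt x y \<or> lt y x"
    and sym: "\<And>x y. adj x y \<Longrightarrow> adj y x"
    and X: "\<And>p q r s. lt p q \<Longrightarrow> lt q r \<Longrightarrow> lt r s \<Longrightarrow> adj p r \<Longrightarrow> adj q s \<Longrightarrow> adj p s"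
    and step: "\<And>j. j < n \<Longrightarrow> adj (f j) (f (Suc j))"
    and noshort: "\<And>a k. Suc a < k \<Longrightarrow> k \<le> n \<Longrightarrow> \<not> adj (f a) (f k)"
    and inj: "\<And>j k. j \<le> n \<Longrightarrow> k \<le> n \<Longrightarrow> f j = f k \<Longrightarrow> j = k"
    and st: "lt (f 0) (f n)"
    and rn: "r \<le> n"
    and mx: "\<And>j. j \<le> n \<Longrightarrow> f j = f r \<or> lt (f j) (f r)"
    and ir: "i < r"
  shows "lt (f i) (f n)"
proof (rule ccontr)
  assume nlt: "\<not> lt (f i) (f n)"
  have "f i \<noteq> f n" using inj[of i n] ir rn by auto
  hence ti: "lt (f n) (f i)" using tot nlt by blast
  have i0: "i \<noteq> 0" using ti st trans[of "f n" "f 0" "f n"] irr by (metis)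
  hence ex: "\<exists>a. lt (f n) (f (Suc a))" using ti by (metis not0_implies_Suc)
  define a where "a = (LEAST a. lt (f n) (f (Suc a)))"
  have a1: "lt (f n) (f (Suc a))" unfolding a_def by (rule LeastI_ex[OF ex])
  have "a \<le> i - 1" unfolding a_def using ti i0 by (intro Least_le) simp
  hence ai: "Suc a \<le> i" using i0 by arith
  have "\<not> lt (f n) (f a)"
  proof (cases a)
    case 0 then show ?thesis using st trans[of "f n" "f 0" "f n"] irr by auto
  next
    case (Suc b)
    have "\<not> b \<ge> a" using Suc by simp
    then show ?thesis using Suc unfolding a_def using Least_le[of "\<lambda>a. lt (f n) (f (Suc a))" b] by auto
  qed
  moreover have "f a \<noteq> f n" using inj[of a n] ai ir rn by auto
  ultimately have a0: "lt (f a) (f n)" using tot by blast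
  have "f (Suc a) \<noteq> f r" using inj[of "Suc a" r] ai ir rn by auto
  hence ar: "lt (f (Suc a)) (f r)" using mx[of "Suc a"] ai ir rn by auto
  define I where "I x = (lt (f a) x \<and> lt x (f (Suc a)))" for x
  have rn2: "r < n"
  proof (rule ccontr)
    assume "\<not> r < n" hence "r = n" using rn by simp
    thus False using a1 ar trans[of "f n" "f (Suc a)" "f r"] irr by auto
  qed
  have nIr: "\<not> I (f r)" unfolding I_def using ar trans[of "f r" "f (Suc a)" "f r"] irr by auto
  have exk: "\<exists>k. r \<le> k \<and> k < n \<and> \<not> I (f k)" using rn2 nIr by blast
  define k where "k = (GREATEST k. r \<le> k \<and> k < n \<and> \<not> I (f k))"
  have kp: "r \<le> k \<and> k < n \<and> \<not> I (f k)" unfolding k_def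
    by (rule GreatestI_ex_nat[OF exk, of n]) auto
  have kmax: "\<And>j. r \<le> j \<and> j < n \<and> \<not> I (f j) \<Longrightarrow> j \<le> k" unfolding k_def
    by (rule Greatest_le_nat[of _ _ n]) auto
  have Ik: "I (f (Suc k))"
  proof (cases "Suc k = n")
    case True then show ?thesis unfolding I_def using a0 a1 by simp
  next
    case False then show ?thesis using kmax[of "Suc k"] kp by fastforce
  qed
  have "f k \<noteq> f a" using inj[of k a] kp ai ir by auto
  moreover have "f k \<noteq> f (Suc a)" using inj[of k "Suc a"] kp ai ir by auto
  ultimately have "(lt (f k) (f a) \<or> lt (f a) (f k)) \<and> (lt (f k) (f (Suc a)) \<or> lt (f (Suc a)) (f k))"
    using tot by blast
  hence cases: "lt (f k) (f a) \<or> lt (f (Suc a)) (f k)" using kp unfolding I_def by blast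
  then show False
  proof
    assume h: "lt (f k) (f a)"
    have "k \<noteq> r" using h mx[of a] ai ir rn trans[of "f r" "f a" "f r"] irr by auto
    hence kb: "Suc (Suc a) < k" using kp ai ir by auto
    have "adj (f k) (f (Suc a))"
      using X[of "f k" "f a" "f (Suc k)" "f (Suc a)"] h Ik step[of k] step[of a] kp ai ir rn
      unfolding I_def by auto
    thus False using noshort[OF kb] kp sym by auto
  next
    assume h: "lt (f (Suc a)) (f k)"
    have kb: "Suc a < k" using kp ai ir by auto
    have "adj (f a) (f k)"
      using X[of "f a" "f (Suc k)" "f (Suc a)" "f k"] h Ik step[of k] step[of a] kp ai ir rn sym
      unfolding I_def by auto
    thus False using noshort[OF kb] kp by auto
  qed
qed


lemma walk_append:
  assumes "walk V E xs" "walk V E ys" "{last xs, hd ys} \<in> E"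
  shows "walk V E (xs @ ys)"
  unfolding walk_def
proof (intro conjI allI impI)
  show "xs @ ys \<noteq> []" using assms(1) unfolding walk_def by simp
  show "set (xs @ ys) \<subseteq> V" using assms(1,2) unfolding walk_def by simp
  fix i assume i: "Suc i < length (xs @ ys)"
  have xs: "xs \<noteq> []" and ys: "ys \<noteq> []" using assms(1,2) unfolding walk_def by auto
  consider "Suc i < length xs" | "Suc i = length xs" | "Suc i > length xs" by linarith
  then show "{(xs @ ys) ! i, (xs @ ys) ! Suc i} \<in> E"
  proof cases
    case 1 then show ?thesis using assms(1) unfolding walk_def by (simp add: nth_append)
  next
    case 2
    have "last xs = xs ! i" using 2[symmetric] xs by (simp add: last_conv_nth)
    moreover have "hd ys = ys ! 0" using ys by (simp add: hd_conv_nth)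
    ultimately show ?thesis using 2 assms(3) by (simp add: nth_append)
  next
    case 3
    then obtain j where j: "i = length xs + j" by (metis less_Suc_eq_le le_iff_add)
    have "Suc j < length ys" using i j by simp
    then have "{ys ! j, ys ! Suc j} \<in> E" using assms(2) unfolding walk_def by simp
    then show ?thesis using j by (simp add: nth_append)
  qed
qed

lemma last_take_nth': "0 < m \<Longrightarrow> m \<le> length xs \<Longrightarrow> last (take m xs) = xs ! (m - 1)"
  by (subst last_conv_nth) auto

lemma walk_take:
  assumes "walk V E P" "0 < m"
  shows "walk V E (take m P)"
  using assms unfolding walk_def by (auto dest: in_set_takeD)

lemma walk_drop:
  assumes "walk V E P" "k < length P"
  shows "walk V E (drop k P)"
  using assms unfolding walk_def by (auto dest: in_set_dropD)

lemma dist_le: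
  assumes "walk V E Q" "hd Q = s" "last Q = t"
  shows "dist V E s t \<le> enat (length Q - 1)"
  unfolding dist_def by (rule INF_lower) (use assms in auto)

lemma sp_noshort:
  assumes sp: "shortest_path V E s t P" and ak: "Suc a < k" "k < length P"
    and e: "{P ! a, P ! k} \<in> E"
  shows False
proof -
  have w: "walk V E P" and h: "hd P = s" and l: "last P = t" and d: "enat (length P - 1) = dist V E s t"
    using sp unfolding shortest_path_def by auto
  have ne: "P \<noteq> []" using ak by auto
  let ?Q = "take (Suc a) P @ drop k P"
  have "walk V E ?Q"
    apply (rule walk_append[OF walk_take[OF w] walk_drop[OF w ak(2)]])
     apply simp
    using ak e by (simp add: last_take_nth' hd_drop_conv_nth)
  moreover have "hd ?Q = s" using h ne by (cases P) auto
  moreover have "last ?Q = t" using l ak by simp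
  ultimately have dle: "dist V E s t \<le> enat (length ?Q - 1)" by (rule dist_le)
  have lt: "length ?Q - 1 < length P - 1" using ak by simp
  show False using d dle lt by (metis enat_ord_simps(1) not_le)
qed

lemma sp_inj:
  assumes sp: "shortest_path V E s t P" and ak: "a < k" "k < length P"
    and e: "P ! a = P ! k"
  shows False
proof -
  have w: "walk V E P" and h: "hd P = s" and l: "last P = t" and d: "enat (length P - 1) = dist V E s t"
    using sp unfolding shortest_path_def by auto
  have ne: "P \<noteq> []" using ak by auto
  obtain Q where Qw: "walk V E Q" and Qh: "hd Q = s" and Ql: "last Q = t"
    and Ql2: "length Q < length P"
  proof (cases a)
    case 0
    show ?thesis
      apply (rule that[of "drop k P"])
      using walk_drop[OF w ak(2)] h l e ak 0 ne by (auto simp: hd_drop_conv_nth hd_conv_nth)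
  next
    case (Suc b)
    have "{P ! b, P ! Suc b} \<in> E" using w ak Suc unfolding walk_def by auto
    hence "walk V E (take a P @ drop k P)"
      apply (intro walk_append[OF walk_take[OF w] walk_drop[OF w ak(2)]])
      using ak e Suc by (simp_all add: last_take_nth' hd_drop_conv_nth)
    moreover have "hd (take a P @ drop k P) = s" using h ne Suc by (cases P) auto
    moreover have "last (take a P @ drop k P) = t" using l ak by simp
    moreover have "length (take a P @ drop k P) < length P" using ak by simp
    ultimately show ?thesis by (rule that)
  qed
  have dle: "dist V E s t \<le> enat (length Q - 1)" by (rule dist_le[OF Qw Qh Ql])
  have lt: "length Q - 1 < length P - 1" using Ql2 Qw unfolding walk_def
    by (cases Q) auto
  show False using d dle lt by (metis enat_ord_simps(1) not_le)
qed

theorem corollary9: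
  fixes V :: "'a::linorder set" and E :: "'a set set" and s t :: 'a and P :: "'a list"
  assumes "simple_graph V E"
    and "X_property E"
    and "s \<in> V" and "t \<in> V" and "s < t"
    and "dist V E s t < \<infinity>"
    and "shortest_path V E s t P"
  shows "\<forall>i < length P. (i < righti P \<longrightarrow> P ! i < t) \<and> (lefti P < i \<longrightarrow> s < P ! i)"
proof -
  note sp = assms(7)
  have w: "walk V E P" and h: "hd P = s" and l: "last P = t"
    using sp unfolding shortest_path_def by auto
  have ne: "P \<noteq> []" using w unfolding walk_def by simp
  define n where "n = length P - 1"
  have ln: "length P = Suc n" using ne n_def by simp
  have P0: "P ! 0 = s" using h ne by (simp add: hd_conv_nth)
  have Pn: "P ! n = t" using l ne n_def by (simp add: last_conv_nth)
  define adj where "adj x y = ({x, y} \<in> E)" for x y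
  have sym: "\<And>x y. adj x y \<Longrightarrow> adj y x" unfolding adj_def by (simp add: insert_commute)
  have X: "\<And>p q r s. p < q \<Longrightarrow> q < r \<Longrightarrow> r < s \<Longrightarrow> adj p r \<Longrightarrow> adj q s \<Longrightarrow> adj p s"
    using assms(2) unfolding X_property_def adj_def by blast
  have step: "\<And>j. j < n \<Longrightarrow> adj (P ! j) (P ! Suc j)"
    using w ln unfolding walk_def adj_def by auto
  have noshort: "\<And>a k. Suc a < k \<Longrightarrow> k \<le> n \<Longrightarrow> \<not> adj (P ! a) (P ! k)"
    using sp_noshort[OF sp] ln unfolding adj_def by (metis less_Suc_eq_le)
  have inj: "\<And>j k. j \<le> n \<Longrightarrow> k \<le> n \<Longrightarrow> P ! j = P ! k \<Longrightarrow> j = k"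
  proof -
    fix j k assume jk: "j \<le> n" "k \<le> n" "P ! j = P ! k"
    show "j = k"
    proof (rule ccontr)
      assume "j \<noteq> k"
      then consider "j < k" | "k < j" by linarith
      then show False using sp_inj[OF sp] jk ln by (metis less_Suc_eq_le)
    qed
  qed
  define r where "r = righti P"
  have rex: "\<exists>i. i < length P \<and> P ! i = Max (set P)"
    using ne by (metis Max_in List.finite_set in_set_conv_nth set_empty)
  have rp: "r < length P \<and> P ! r = Max (set P)"
    unfolding r_def righti_def by (rule LeastI_ex[OF rex])
  have mx: "\<And>j. j \<le> n \<Longrightarrow> P ! j = P ! r \<or> P ! j < P ! r"
    using rp ln by (metis Max_ge List.finite_set nth_mem le_imp_less_Suc order.order_iff_strict)
  define q where "q = lefti P"
  have qex: "\<exists>i. i < length P \<and> P ! i = Min (set P)"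
    using ne by (metis Min_in List.finite_set in_set_conv_nth set_empty)
  have qp: "q < length P \<and> P ! q = Min (set P)"
    unfolding q_def lefti_def by (rule LeastI_ex[OF qex])
  have mn: "\<And>j. j \<le> n \<Longrightarrow> P ! j = P ! q \<or> P ! q < P ! j"
    using qp ln by (metis Min_le List.finite_set nth_mem le_imp_less_Suc order.order_iff_strict)
  show ?thesis
  proof (intro allI impI conjI)
    fix i assume il: "i < length P" and ir: "i < righti P"
    show "P ! i < t"
    proof -
      have "P ! i < P ! n"
        by (rule core[where lt="(<)" and adj=adj and f="\<lambda>j. P ! j" and n=n and r=r and i=i])
          (use sym X step noshort inj mx rp ln ir assms(5) P0 Pn r_def in auto)
      then show ?thesis using Pn by simp
    qed
  next
    fix i assume il: "i < length P" and iq: "lefti P < i"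
    have "(\<lambda>x y. y < x) (P ! (n - (n - i))) (P ! (n - n))"
    proof (rule core[where lt="\<lambda>x y. y < x" and adj=adj and f="\<lambda>j. P ! (n - j)" and n=n and r="n - q" and i="n - i"])
      show "\<And>x y z::'a. z < y \<Longrightarrow> y < x \<Longrightarrow> z < x" by auto
      show "\<And>x::'a. \<not> x < x" by auto
      show "\<And>x y::'a. x \<noteq> y \<Longrightarrow> y < x \<or> x < y" by auto
      show "\<And>x y. adj x y \<Longrightarrow> adj y x" by (rule sym)
      show "\<And>p q r s::'a. q < p \<Longrightarrow> r < q \<Longrightarrow> s < r \<Longrightarrow> adj p r \<Longrightarrow> adj q s \<Longrightarrow> adj p s"
        using X sym by blast
      show "\<And>j. j < n \<Longrightarrow> adj (P ! (n - j)) (P ! (n - Suc j))"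
      proof -
        fix j assume "j < n"
        then have eq: "n - j = Suc (n - Suc j)" by simp
        have a: "adj (P ! (n - Suc j)) (P ! Suc (n - Suc j))" by (rule step) (use \<open>j < n\<close> in simp)
        show "adj (P ! (n - j)) (P ! (n - Suc j))" unfolding eq by (rule sym[OF a])
      qed
      show "\<And>a k. Suc a < k \<Longrightarrow> k \<le> n \<Longrightarrow> \<not> adj (P ! (n - a)) (P ! (n - k))"
      proof -
        fix a k assume ak: "Suc a < k" "k \<le> n"
        have "Suc (n - k) < n - a" using ak by arith
        hence "\<not> adj (P ! (n - k)) (P ! (n - a))" using noshort[of "n - k" "n - a"] by simp
        thus "\<not> adj (P ! (n - a)) (P ! (n - k))" using sym by blast
      qed
      show "\<And>j k. j \<le> n \<Longrightarrow> k \<le> n \<Longrightarrow> P ! (n - j) = P ! (n - k) \<Longrightarrow> j = k"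
      proof -
        fix j k assume jk: "j \<le> n" "k \<le> n" "P ! (n - j) = P ! (n - k)"
        have "n - j = n - k" using inj[of "n - j" "n - k"] jk by simp
        thus "j = k" using jk by arith
      qed
      show "P ! (n - n) < P ! (n - 0)" using P0 Pn assms(5) by simp
      show "n - q \<le> n" by simp
      show "\<And>j. j \<le> n \<Longrightarrow> P ! (n - j) = P ! (n - (n - q)) \<or> P ! (n - (n - q)) < P ! (n - j)"
        using mn qp ln by simp
      show "n - i < n - q" using iq il ln q_def by simp
    qed
    then show "s < P ! i" using il ln P0 by simp
  qed
qed

end
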